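(* A ring $R$ is almost Armendariz if and only if the polynomial ring $R[x]$ is almost Armendariz.
   Context: All rings are associative with identity. For a ring $R$, $P(R)$ denotes the prime radical of $R$ (the intersection of all prime ideals of $R$, equivalently the set of strongly nilpotent elements of $R$). A ring $R$ is called almost Armendariz if whenever $f(x)=\sum_{i=0}^m a_ix^i$ and $g(x)=\sum_{j=0}^n b_jx^j\in R[x]$ satisfy $f(x)g(x)=0$, then $a_ib_j\in P(R)$ for all $0\le i\le m$, $0\le j\le n$. *)

theory Defs
  imports "HOL-Algebra.UnivPoly"
begin

text \<open>Prime ideals of a (not necessarily commutative) ring with identity:
  a proper two-sided ideal P such that for all ideals A, B, if AB is contained in P
  then A or B is contained in P.  (AB is contained in P iff all products a b with
  a in A, b in B lie in P, since P is closed under finite sums.)\<close>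
definition nc_prime_ideal :: "'a set \<Rightarrow> ('a, 'm) ring_scheme \<Rightarrow> bool" where
  "nc_prime_ideal P R \<longleftrightarrow> ideal P R \<and> P \<noteq> carrier R \<and>
     (\<forall>A B. ideal A R \<longrightarrow> ideal B R \<longrightarrow>
        (\<forall>a\<in>A. \<forall>b\<in>B. a \<otimes>\<^bsub>R\<^esub> b \<in> P) \<longrightarrow> A \<subseteq> P \<or> B \<subseteq> P)"

definition prime_radical :: "('a, 'm) ring_scheme \<Rightarrow> 'a set" where
  "prime_radical R = {x \<in> carrier R. \<forall>P. nc_prime_ideal P R \<longrightarrow> x \<in> P}"

definition almost_armendariz :: "('a, 'm) ring_scheme \<Rightarrow> bool" where
  "almost_armendariz R \<longleftrightarrow>
     (\<forall>f \<in> carrier (UP R). \<forall>g \<in> carrier (UP R).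
        f \<otimes>\<^bsub>UP R\<^esub> g = \<zero>\<^bsub>UP R\<^esub> \<longrightarrow>
        (\<forall>i j. coeff (UP R) f i \<otimes>\<^bsub>R\<^esub> coeff (UP R) g j \<in> prime_radical R))"

end

theory Submission
  imports Defs
begin

lemma (in ring) idealI':
  assumes "S \<subseteq> carrier R" "\<zero> \<in> S"
    and "\<And>x y. x \<in> S \<Longrightarrow> y \<in> S \<Longrightarrow> x \<oplus> y \<in> S"
    and "\<And>x. x \<in> S \<Longrightarrow> \<ominus> x \<in> S"
    and "\<And>x r. x \<in> S \<Longrightarrow> r \<in> carrier R \<Longrightarrow> r \<otimes> x \<in> S"
    and "\<And>x r. x \<in> S \<Longrightarrow> r \<in> carrier R \<Longrightarrow> x \<otimes> r \<in> S"
  shows "ideal S R"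
proof (rule idealI[OF ring_axioms])
  show "subgroup S (add_monoid R)"
    using assms by (intro subgroup.intro) (auto simp: a_inv_def[symmetric])
qed (use assms in auto)

lemma (in ring) finsum_ideal:
  assumes I: "ideal I R" and fin: "finite A" and h: "\<forall>i\<in>A. f i \<in> I"
  shows "finsum R f A \<in> I"
  using fin h
proof (induct A rule: finite_induct)
  case empty
  then show ?case using I by (simp add: additive_subgroup.zero_closed ideal.axioms(1))
next
  case (insert a F)
  have sub: "I \<subseteq> carrier R" using I by (simp add: additive_subgroup.a_subset ideal.axioms(1))
  then have "f \<in> F \<rightarrow> carrier R" "f a \<in> carrier R" using insert by auto
  then have "finsum R f (insert a F) = f a \<oplus> finsum R f F" using insert by simp
  then show ?case using insert I
    by (simp add: additive_subgroup.a_closed ideal.axioms(1))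
qed

lemma (in ring) prime_elem:
  assumes P: "nc_prime_ideal I R" and a: "a \<in> carrier R" and b: "b \<in> carrier R"
    and h: "\<forall>r\<in>carrier R. a \<otimes> r \<otimes> b \<in> I"
  shows "a \<in> I \<or> b \<in> I"
proof -
  interpret I: ideal I R using P by (simp add: nc_prime_ideal_def)
  define A where "A = {x\<in>carrier R. \<forall>r\<in>carrier R. x \<otimes> r \<otimes> b \<in> I}"
  define B where "B = {y\<in>carrier R. \<forall>x\<in>A. \<forall>r\<in>carrier R. x \<otimes> r \<otimes> y \<in> I}"
  have iA: "ideal A R"
  proof (rule idealI')
    show "\<zero> \<in> A" using b by (simp add: A_def)
    fix x y assume x: "x \<in> A" and y: "y \<in> A"
    show "x \<oplus> y \<in> A" using x y b unfolding A_def by (auto simp: l_distr)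
  next
    fix x assume x: "x \<in> A"
    show "\<ominus> x \<in> A" using x b unfolding A_def by (auto simp: l_minus)
  next
    fix x r assume x: "x \<in> A" and r: "r \<in> carrier R"
    show "r \<otimes> x \<in> A" using x r b unfolding A_def by (auto simp: m_assoc I.I_l_closed)
    show "x \<otimes> r \<in> A" unfolding A_def
    proof (intro CollectI conjI ballI)
      show "x \<otimes> r \<in> carrier R" using x r by (simp add: A_def)
      fix s assume s: "s \<in> carrier R"
      have "x \<otimes> (r \<otimes> s) \<otimes> b \<in> I" using x r s by (simp add: A_def)
      then show "x \<otimes> r \<otimes> s \<otimes> b \<in> I" using x r s by (simp add: A_def m_assoc)
    qed
  qed (auto simp: A_def)
  have iB: "ideal B R"
  proof (rule idealI')
    show "\<zero> \<in> B" unfolding B_def A_def by auto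
    fix x y assume x: "x \<in> B" and y: "y \<in> B"
    show "x \<oplus> y \<in> B" using x y unfolding B_def A_def by (auto simp: r_distr)
  next
    fix x assume x: "x \<in> B"
    show "\<ominus> x \<in> B" using x unfolding B_def A_def by (auto simp: r_minus)
  next
    fix x r assume x: "x \<in> B" and r: "r \<in> carrier R"
    show "r \<otimes> x \<in> B" using x r unfolding B_def A_def by (auto simp: m_assoc)
    show "x \<otimes> r \<in> B" unfolding B_def
    proof (intro CollectI conjI ballI)
      show "x \<otimes> r \<in> carrier R" using x r by (simp add: B_def)
      fix z s assume z: "z \<in> A" and s: "s \<in> carrier R"
      have zc: "z \<in> carrier R" using z by (simp add: A_def)
      have "z \<otimes> s \<otimes> x \<in> I" using x z s by (simp add: B_def)
      then have "z \<otimes> s \<otimes> x \<otimes> r \<in> I" using r by (simp add: I.I_r_closed)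
      then show "z \<otimes> s \<otimes> (x \<otimes> r) \<in> I" using x r s zc by (simp add: B_def m_assoc)
    qed
  qed (auto simp: B_def)
  have "\<forall>x\<in>A. \<forall>y\<in>B. x \<otimes> y \<in> I"
  proof (intro ballI)
    fix x y assume x: "x \<in> A" and y: "y \<in> B"
    then have "x \<otimes> \<one> \<otimes> y \<in> I" unfolding B_def by auto
    then show "x \<otimes> y \<in> I" using x unfolding A_def by simp
  qed
  then have "A \<subseteq> I \<or> B \<subseteq> I" using P iA iB by (simp add: nc_prime_ideal_def)
  moreover have "a \<in> A" using a h by (simp add: A_def)
  moreover have "b \<in> B" using b unfolding B_def A_def by auto
  ultimately show ?thesis by auto
qed


lemma (in ring) ideal_cancel:
  assumes I: "ideal I R" and x: "x \<in> carrier R" and y: "y \<in> I" and xy: "x \<oplus> y \<in> I"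
  shows "x \<in> I"
proof -
  interpret I: ideal I R by (rule I)
  have yc: "y \<in> carrier R" using y by (rule I.Icarr)
  have "x = (x \<oplus> y) \<oplus> \<ominus> y" using x yc by (simp add: a_assoc r_neg)
  also have "\<dots> \<in> I" using xy y by simp
  finally show ?thesis .
qed

definition ext_id :: "'a set \<Rightarrow> ('a, 'm) ring_scheme \<Rightarrow> (nat \<Rightarrow> 'a) set" where
  "ext_id I R = {p \<in> carrier (UP R). \<forall>i. coeff (UP R) p i \<in> I}"

definition contr_id :: "(nat \<Rightarrow> 'a) set \<Rightarrow> ('a, 'm) ring_scheme \<Rightarrow> 'a set" where
  "contr_id Q R = {c \<in> carrier R. monom (UP R) c 0 \<in> Q}"

lemma UP_ring_of: "ring R \<Longrightarrow> UP_ring R"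
  by (simp add: UP_ring_def)

context UP_ring
begin

lemma coeff_monom1_mult:
  assumes p: "p \<in> carrier P"
  shows "coeff P (monom P \<one> m \<otimes>\<^bsub>P\<^esub> p) n = (if m \<le> n then coeff P p (n - m) else \<zero>)"
proof -
  have "coeff P (monom P \<one> m \<otimes>\<^bsub>P\<^esub> p) n = (\<Oplus>i\<in>{..n}. (if m = i then \<one> else \<zero>) \<otimes> coeff P p (n - i))"
    using p by simp
  also have "\<dots> = (\<Oplus>i\<in>{..n}. (if m = i then coeff P p (n - i) else \<zero>))"
    by (rule R.finsum_cong') (use p in auto)
  also have "\<dots> = (if m \<le> n then coeff P p (n - m) else \<zero>)"
  proof (cases "m \<le> n")
    case True
    then show ?thesis using R.finsum_singleton[of m "{..n}" "\<lambda>i. coeff P p (n - i)"] p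
      by (auto simp: Pi_def)
  next
    case False
    then have "(\<Oplus>i\<in>{..n}. (if m = i then coeff P p (n - i) else \<zero>)) = (\<Oplus>i\<in>{..n}. \<zero>)"
      by (intro R.finsum_cong') auto
    then show ?thesis using False by simp
  qed
  finally show ?thesis .
qed

lemma coeff_mult_monom:
  assumes p: "p \<in> carrier P" and c: "c \<in> carrier R"
  shows "coeff P (p \<otimes>\<^bsub>P\<^esub> monom P c m) n = (if m \<le> n then coeff P p (n - m) \<otimes> c else \<zero>)"
proof -
  have "coeff P (p \<otimes>\<^bsub>P\<^esub> monom P c m) n = (\<Oplus>i\<in>{..n}. coeff P p i \<otimes> (if m = n - i then c else \<zero>))"
    using p c by simp
  also have "\<dots> = (\<Oplus>i\<in>{..n}. (if n - m = i \<and> m \<le> n then coeff P p i \<otimes> c else \<zero>))"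
    by (rule R.finsum_cong') (use p c in auto)
  also have "\<dots> = (if m \<le> n then coeff P p (n - m) \<otimes> c else \<zero>)"
  proof (cases "m \<le> n")
    case True
    then have "(\<Oplus>i\<in>{..n}. (if n - m = i \<and> m \<le> n then coeff P p i \<otimes> c else \<zero>))
        = (\<Oplus>i\<in>{..n}. (if n - m = i then coeff P p i \<otimes> c else \<zero>))"
      by (intro R.finsum_cong') (use p c in auto)
    then show ?thesis using True R.finsum_singleton[of "n - m" "{..n}" "\<lambda>i. coeff P p i \<otimes> c"] p c
      by (auto simp: Pi_def)
  next
    case False
    then have "(\<Oplus>i\<in>{..n}. (if n - m = i \<and> m \<le> n then coeff P p i \<otimes> c else \<zero>)) = (\<Oplus>i\<in>{..n}. \<zero>)"
      by (intro R.finsum_cong') auto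
    then show ?thesis using False by simp
  qed
  finally show ?thesis .
qed

lemma coeff_mult_monom1:
  assumes p: "p \<in> carrier P"
  shows "coeff P (p \<otimes>\<^bsub>P\<^esub> monom P \<one> m) n = (if m \<le> n then coeff P p (n - m) else \<zero>)"
  using coeff_mult_monom[OF p R.one_closed] p by simp

lemma monom1_central:
  assumes p: "p \<in> carrier P"
  shows "monom P \<one> m \<otimes>\<^bsub>P\<^esub> p = p \<otimes>\<^bsub>P\<^esub> monom P \<one> m"
  by (rule up_eqI) (use p in \<open>simp_all del: coeff_mult add: coeff_monom1_mult coeff_mult_monom1\<close>)


lemma ext_id_P: "ext_id I R = {p \<in> carrier P. \<forall>i. coeff P p i \<in> I}"
  by (simp add: ext_id_def P_def)

lemma contr_id_P: "contr_id Q R = {c \<in> carrier R. monom P c 0 \<in> Q}"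
  by (simp add: contr_id_def P_def)

lemma ext_ideal:
  assumes I: "ideal I R"
  shows "ideal (ext_id I R) P"
proof -
  interpret I: ideal I R by (rule I)
  show ?thesis
  proof (rule P.idealI')
    show "ext_id I R \<subseteq> carrier P" by (auto simp: ext_id_P)
    show "\<zero>\<^bsub>P\<^esub> \<in> ext_id I R" by (auto simp: ext_id_P)
  next
    fix x y assume "x \<in> ext_id I R" "y \<in> ext_id I R"
    then show "x \<oplus>\<^bsub>P\<^esub> y \<in> ext_id I R" by (auto simp: ext_id_P)
  next
    fix x assume "x \<in> ext_id I R"
    then show "\<ominus>\<^bsub>P\<^esub> x \<in> ext_id I R" by (auto simp: ext_id_P)
  next
    fix x r assume x: "x \<in> ext_id I R" and r: "r \<in> carrier P"
    show "r \<otimes>\<^bsub>P\<^esub> x \<in> ext_id I R"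
      using x r by (auto simp: ext_id_P intro!: R.finsum_ideal[OF I] I.I_l_closed)
    show "x \<otimes>\<^bsub>P\<^esub> r \<in> ext_id I R"
      using x r by (auto simp: ext_id_P intro!: R.finsum_ideal[OF I] I.I_r_closed)
  qed
qed

lemma coeffs_in_ideal:
  assumes Q: "ideal Q P" and p: "p \<in> carrier P"
    and h: "\<And>i. monom P (coeff P p i) 0 \<in> Q"
  shows "p \<in> Q"
proof -
  have "p = (\<Oplus>\<^bsub>P\<^esub> i \<in> {..deg R p}. monom P (coeff P p i) i)"
    using up_repr[OF p] by simp
  also have "\<dots> \<in> Q"
  proof (rule P.finsum_ideal[OF Q], simp, intro ballI)
    fix i
    have "monom P (coeff P p i) i = monom P (coeff P p i \<otimes> \<one>) (0 + i)"
      using p by simp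
    also have "\<dots> = monom P (coeff P p i) 0 \<otimes>\<^bsub>P\<^esub> monom P \<one> i"
      using p by (rule_tac monom_mult) simp_all
    also have "\<dots> \<in> Q" using h Q by (simp add: ideal.I_r_closed)
    finally show "monom P (coeff P p i) i \<in> Q" .
  qed
  finally show ?thesis .
qed


lemma contr_prime:
  assumes Q: "nc_prime_ideal Q P"
  shows "nc_prime_ideal (contr_id Q R) R"
proof -
  have iQ: "ideal Q P" and nQ: "Q \<noteq> carrier P"
    and pQ: "\<And>A B. ideal A P \<Longrightarrow> ideal B P \<Longrightarrow> (\<forall>a\<in>A. \<forall>b\<in>B. a \<otimes>\<^bsub>P\<^esub> b \<in> Q) \<Longrightarrow> A \<subseteq> Q \<or> B \<subseteq> Q"
    using Q by (auto simp: nc_prime_ideal_def)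
  interpret Q: ideal Q P by (rule iQ)
  have iC: "ideal (contr_id Q R) R"
  proof (rule R.idealI')
    show "contr_id Q R \<subseteq> carrier R" by (auto simp: contr_id_P)
    show "\<zero> \<in> contr_id Q R" by (auto simp: contr_id_P)
  next
    fix x y assume "x \<in> contr_id Q R" "y \<in> contr_id Q R"
    then show "x \<oplus> y \<in> contr_id Q R" by (auto simp: contr_id_P)
  next
    fix x assume "x \<in> contr_id Q R"
    then show "\<ominus> x \<in> contr_id Q R" by (auto simp: contr_id_P)
  next
    fix x r assume x: "x \<in> contr_id Q R" and r: "r \<in> carrier R"
    have "monom P (r \<otimes> x) (0 + 0) = monom P r 0 \<otimes>\<^bsub>P\<^esub> monom P x 0"
      using x r by (intro monom_mult) (auto simp: contr_id_P)
    then show "r \<otimes> x \<in> contr_id Q R" using x r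
      by (auto simp: contr_id_P intro: Q.I_l_closed)
    have "monom P (x \<otimes> r) (0 + 0) = monom P x 0 \<otimes>\<^bsub>P\<^esub> monom P r 0"
      using x r by (intro monom_mult) (auto simp: contr_id_P)
    then show "x \<otimes> r \<in> contr_id Q R" using x r
      by (auto simp: contr_id_P intro: Q.I_r_closed)
  qed
  have nC: "contr_id Q R \<noteq> carrier R"
  proof
    assume "contr_id Q R = carrier R"
    then have "\<one> \<in> contr_id Q R" by simp
    then have "\<one>\<^bsub>P\<^esub> \<in> Q" by (simp add: contr_id_P)
    then show False using nQ Q.one_imp_carrier by simp
  qed
  have pC: "A \<subseteq> contr_id Q R \<or> B \<subseteq> contr_id Q R"
    if A: "ideal A R" and B: "ideal B R" and AB: "\<forall>a\<in>A. \<forall>b\<in>B. a \<otimes> b \<in> contr_id Q R" for A B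
  proof -
    interpret A: ideal A R by (rule A)
    interpret B: ideal B R by (rule B)
    have "\<forall>f\<in>ext_id A R. \<forall>g\<in>ext_id B R. f \<otimes>\<^bsub>P\<^esub> g \<in> Q"
    proof (intro ballI)
      fix f g assume f: "f \<in> ext_id A R" and g: "g \<in> ext_id B R"
      have fc: "f \<in> carrier P" and gc: "g \<in> carrier P" using f g by (auto simp: ext_id_P)
      show "f \<otimes>\<^bsub>P\<^esub> g \<in> Q"
      proof (rule coeffs_in_ideal[OF iQ])
        show "f \<otimes>\<^bsub>P\<^esub> g \<in> carrier P" using fc gc by simp
        fix i
        have "coeff P (f \<otimes>\<^bsub>P\<^esub> g) i \<in> contr_id Q R"
          using fc gc f g AB by (auto simp: ext_id_P intro!: R.finsum_ideal[OF iC])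
        then show "monom P (coeff P (f \<otimes>\<^bsub>P\<^esub> g) i) 0 \<in> Q" by (simp add: contr_id_P)
      qed
    qed
    then have "ext_id A R \<subseteq> Q \<or> ext_id B R \<subseteq> Q"
      using pQ ext_ideal[OF A] ext_ideal[OF B] by blast
    moreover have "monom P a 0 \<in> ext_id A R" if "a \<in> A" for a
      using that A.Icarr by (auto simp: ext_id_P)
    moreover have "monom P b 0 \<in> ext_id B R" if "b \<in> B" for b
      using that B.Icarr by (auto simp: ext_id_P)
    ultimately show ?thesis using A.Icarr B.Icarr by (auto simp: contr_id_P)
  qed
  show ?thesis using iC nC pC by (simp add: nc_prime_ideal_def)
qed

lemma ext_prime_elem:
  assumes I: "nc_prime_ideal I R" and f: "f \<in> carrier P" and g: "g \<in> carrier P"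
    and h: "\<forall>r\<in>carrier R. f \<otimes>\<^bsub>P\<^esub> monom P r 0 \<otimes>\<^bsub>P\<^esub> g \<in> ext_id I R"
  shows "f \<in> ext_id I R \<or> g \<in> ext_id I R"
proof (rule ccontr)
  assume "\<not> (f \<in> ext_id I R \<or> g \<in> ext_id I R)"
  then have nf: "\<exists>i. coeff P f i \<notin> I" and ng: "\<exists>i. coeff P g i \<notin> I"
    using f g by (auto simp: ext_id_P)
  have iI: "ideal I R" using I by (simp add: nc_prime_ideal_def)
  interpret I: ideal I R by (rule iI)
  define Sf where "Sf = {i. coeff P f i \<notin> I}"
  define Sg where "Sg = {i. coeff P g i \<notin> I}"
  have finf: "finite Sf"
  proof (rule finite_subset)
    show "Sf \<subseteq> {..deg R f}"
    proof
      fix x assume x: "x \<in> Sf"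
      show "x \<in> {..deg R f}"
      proof (rule ccontr)
        assume "x \<notin> {..deg R f}"
        then have "coeff P f x = \<zero>" using deg_aboveD[OF _ f] by simp
        then show False using x by (simp add: Sf_def)
      qed
    qed
  qed simp
  have fing: "finite Sg"
  proof (rule finite_subset)
    show "Sg \<subseteq> {..deg R g}"
    proof
      fix x assume x: "x \<in> Sg"
      show "x \<in> {..deg R g}"
      proof (rule ccontr)
        assume "x \<notin> {..deg R g}"
        then have "coeff P g x = \<zero>" using deg_aboveD[OF _ g] by simp
        then show False using x by (simp add: Sg_def)
      qed
    qed
  qed simp
  define m where "m = Max Sf"
  define n where "n = Max Sg"
  have m: "coeff P f m \<notin> I" using finf nf Max_in[OF finf] by (auto simp: m_def Sf_def)
  have n: "coeff P g n \<notin> I" using fing ng Max_in[OF fing] by (auto simp: n_def Sg_def)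
  have fabove: "coeff P f i \<in> I" if "m < i" for i
    using Max_ge[OF finf, of i] that by (auto simp: m_def Sf_def)
  have gabove: "coeff P g i \<in> I" if "n < i" for i
    using Max_ge[OF fing, of i] that by (auto simp: n_def Sg_def)
  have "\<forall>r\<in>carrier R. coeff P f m \<otimes> r \<otimes> coeff P g n \<in> I"
  proof
    fix r assume r: "r \<in> carrier R"
    let ?h = "f \<otimes>\<^bsub>P\<^esub> monom P r 0"
    have hc: "?h \<in> carrier P" using f r by simp
    have ch: "coeff P ?h i = coeff P f i \<otimes> r" for i
      using coeff_mult_monom[OF f r, of 0 i] by simp
    let ?t = "\<lambda>i. coeff P f i \<otimes> r \<otimes> coeff P g (m + n - i)"
    have "coeff P (?h \<otimes>\<^bsub>P\<^esub> g) (m + n) \<in> I" using h r by (auto simp: ext_id_P)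
    moreover have "coeff P (?h \<otimes>\<^bsub>P\<^esub> g) (m + n) = (\<Oplus>i\<in>{..m+n}. coeff P ?h i \<otimes> coeff P g (m + n - i))"
      by (rule coeff_mult[OF hc g])
    moreover have "(\<Oplus>i\<in>{..m+n}. coeff P ?h i \<otimes> coeff P g (m + n - i)) = (\<Oplus>i\<in>{..m+n}. ?t i)"
      by (rule R.finsum_cong') (simp_all only: ch, auto simp: Pi_def f g r)
    ultimately have "(\<Oplus>i\<in>{..m+n}. ?t i) \<in> I" by simp
    moreover have "(\<Oplus>i\<in>{..m+n}. ?t i) = ?t m \<oplus> (\<Oplus>i\<in>{..m+n} - {m}. ?t i)"
    proof -
      have ins: "{..m+n} = insert m ({..m+n} - {m})" by auto
      have "(\<Oplus>i\<in>{..m+n}. ?t i) = (\<Oplus>i\<in>insert m ({..m+n} - {m}). ?t i)"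
        by (subst ins) (rule refl)
      also have "\<dots> = ?t m \<oplus> (\<Oplus>i\<in>{..m+n} - {m}. ?t i)"
        by (rule R.finsum_insert) (auto simp: Pi_def f g r)
      finally show ?thesis .
    qed
    ultimately have "?t m \<oplus> (\<Oplus>i\<in>{..m+n} - {m}. ?t i) \<in> I" by simp
    moreover have "(\<Oplus>i\<in>{..m+n} - {m}. ?t i) \<in> I"
    proof (rule R.finsum_ideal[OF iI], simp, intro ballI)
      fix i assume i: "i \<in> {..m+n} - {m}"
      show "?t i \<in> I"
      proof (cases "m < i")
        case True
        then show ?thesis using fabove[OF True] r g by (simp add: I.I_r_closed)
      next
        case False
        then have "n < m + n - i" using i by auto
        then show ?thesis using gabove f r by (simp add: I.I_l_closed)
      qed
    qed
    ultimately have "?t m \<in> I"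
      using R.ideal_cancel[OF iI, of "?t m"] f g r by simp
    then show "coeff P f m \<otimes> r \<otimes> coeff P g n \<in> I" by simp
  qed
  then have "coeff P f m \<in> I \<or> coeff P g n \<in> I"
    using R.prime_elem[OF I] f g by simp
  then show False using m n by simp
qed

lemma ext_prime:
  assumes I: "nc_prime_ideal I R"
  shows "nc_prime_ideal (ext_id I R) P"
proof -
  have iI: "ideal I R" and nI: "I \<noteq> carrier R" using I by (auto simp: nc_prime_ideal_def)
  interpret I: ideal I R by (rule iI)
  have iE: "ideal (ext_id I R) P" by (rule ext_ideal[OF iI])
  have nE: "ext_id I R \<noteq> carrier P"
  proof
    assume "ext_id I R = carrier P"
    then have "\<one>\<^bsub>P\<^esub> \<in> ext_id I R" by simp
    then have "\<one> \<in> I" by (auto simp: ext_id_P dest: spec[of _ 0])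
    then show False using nI I.one_imp_carrier by simp
  qed
  have pE: "A \<subseteq> ext_id I R \<or> B \<subseteq> ext_id I R"
    if A: "ideal A P" and B: "ideal B P" and AB: "\<forall>a\<in>A. \<forall>b\<in>B. a \<otimes>\<^bsub>P\<^esub> b \<in> ext_id I R" for A B
  proof (rule ccontr)
    interpret A: ideal A P by (rule A)
    interpret B: ideal B P by (rule B)
    assume "\<not> (A \<subseteq> ext_id I R \<or> B \<subseteq> ext_id I R)"
    then obtain f g where f: "f \<in> A" "f \<notin> ext_id I R" and g: "g \<in> B" "g \<notin> ext_id I R" by auto
    have "\<forall>r\<in>carrier R. f \<otimes>\<^bsub>P\<^esub> monom P r 0 \<otimes>\<^bsub>P\<^esub> g \<in> ext_id I R"
    proof
      fix r assume r: "r \<in> carrier R"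
      have "f \<otimes>\<^bsub>P\<^esub> monom P r 0 \<in> A" using f r by (intro A.I_r_closed) simp_all
      then show "f \<otimes>\<^bsub>P\<^esub> monom P r 0 \<otimes>\<^bsub>P\<^esub> g \<in> ext_id I R" using AB g by blast
    qed
    then show False using ext_prime_elem[OF I A.Icarr[OF f(1)] B.Icarr[OF g(1)]] f g by auto
  qed
  show ?thesis using iE nE pE by (simp add: nc_prime_ideal_def)
qed

end


context UP_ring
begin

lemma kron_coeff:
  assumes Hc: "\<And>i. Hs i \<in> carrier P"
    and Hk: "\<And>i s. k \<le> s \<Longrightarrow> coeff P (Hs i) s = \<zero>"
    and Hd: "\<And>i. d < i \<Longrightarrow> Hs i = \<zero>\<^bsub>P\<^esub>"
    and s: "s < k"
  shows "coeff P (\<Oplus>\<^bsub>P\<^esub> i\<in>{..d}. Hs i \<otimes>\<^bsub>P\<^esub> monom P \<one> (k*i)) (k*j+s) = coeff P (Hs j) s"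
proof -
  have "coeff P (\<Oplus>\<^bsub>P\<^esub> i\<in>{..d}. Hs i \<otimes>\<^bsub>P\<^esub> monom P \<one> (k*i)) (k*j+s)
      = (\<Oplus>i\<in>{..d}. coeff P (Hs i \<otimes>\<^bsub>P\<^esub> monom P \<one> (k*i)) (k*j+s))"
    by (rule coeff_finsum) (auto simp: Pi_def Hc)
  also have "\<dots> = (\<Oplus>i\<in>{..d}. if j = i then coeff P (Hs i) s else \<zero>)"
  proof (rule R.finsum_cong')
    fix i assume "i \<in> {..d}"
    show "coeff P (Hs i \<otimes>\<^bsub>P\<^esub> monom P \<one> (k*i)) (k*j+s) = (if j = i then coeff P (Hs i) s else \<zero>)"
    proof (cases "i = j")
      case True
      then show ?thesis by (simp del: coeff_mult add: coeff_mult_monom1 Hc)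
    next
      case False
      show ?thesis
      proof (cases "i < j")
        case True
        then have "k * (i + 1) \<le> k * j" by (intro mult_le_mono2) simp
        then have le: "k*i + k \<le> k*j" by simp
        then have "k*i \<le> k*j+s" "k \<le> k*j+s - k*i" by linarith+
        then show ?thesis using False by (simp del: coeff_mult add: coeff_mult_monom1 Hc Hk)
      next
        case False2: False
        then have "j < i" using False by simp
        then have "k * (j + 1) \<le> k * i" by (intro mult_le_mono2) simp
        then have "k*j + k \<le> k*i" by simp
        then have "\<not> k*i \<le> k*j+s" using s by linarith
        then show ?thesis using False by (simp del: coeff_mult add: coeff_mult_monom1 Hc)
      qed
    qed
  qed (auto simp: Hc)
  also have "\<dots> = coeff P (Hs j) s"
  proof (cases "j \<le> d")
    case True
    then show ?thesis
      using R.finsum_singleton[of j "{..d}" "\<lambda>i. coeff P (Hs i) s"] Hc by (auto simp: Pi_def)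
  next
    case False
    then have "(\<Oplus>i\<in>{..d}. if j = i then coeff P (Hs i) s else \<zero>) = (\<Oplus>i\<in>{..d}. \<zero>)"
      by (intro R.finsum_cong') auto
    then show ?thesis using False Hd[of j] by simp
  qed
  finally show ?thesis .
qed

lemma kron_mult_zero:
  assumes Fc: "\<And>i. Fs i \<in> carrier P" and Gc: "\<And>i. Gs i \<in> carrier P"
    and Fd: "\<And>i. dF < i \<Longrightarrow> Fs i = \<zero>\<^bsub>P\<^esub>" and Gd: "\<And>i. dG < i \<Longrightarrow> Gs i = \<zero>\<^bsub>P\<^esub>"
    and Z: "\<And>l. (\<Oplus>\<^bsub>P\<^esub> i\<in>{..l}. Fs i \<otimes>\<^bsub>P\<^esub> Gs (l - i)) = \<zero>\<^bsub>P\<^esub>"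
  shows "(\<Oplus>\<^bsub>P\<^esub> i\<in>{..dF}. Fs i \<otimes>\<^bsub>P\<^esub> monom P \<one> (k*i)) \<otimes>\<^bsub>P\<^esub>
         (\<Oplus>\<^bsub>P\<^esub> i\<in>{..dG}. Gs i \<otimes>\<^bsub>P\<^esub> monom P \<one> (k*i)) = \<zero>\<^bsub>P\<^esub>"
proof -
  let ?X = "\<lambda>n. monom P \<one> n"
  let ?f = "\<lambda>i. Fs i \<otimes>\<^bsub>P\<^esub> ?X (k*i)"
  let ?g = "\<lambda>i. Gs i \<otimes>\<^bsub>P\<^esub> ?X (k*i)"
  have cp: "(\<Oplus>\<^bsub>P\<^esub> l\<in>{..dF+dG}. \<Oplus>\<^bsub>P\<^esub> i\<in>{..l}. ?f i \<otimes>\<^bsub>P\<^esub> ?g (l-i))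
      = (\<Oplus>\<^bsub>P\<^esub> i\<in>{..dF}. ?f i) \<otimes>\<^bsub>P\<^esub> (\<Oplus>\<^bsub>P\<^esub> i\<in>{..dG}. ?g i)"
    by (rule P.cauchy_product) (auto simp: Fd Gd Pi_def Fc Gc)
  have tm: "?f i \<otimes>\<^bsub>P\<^esub> ?g (l-i) = (Fs i \<otimes>\<^bsub>P\<^esub> Gs (l-i)) \<otimes>\<^bsub>P\<^esub> ?X (k*l)"
    if il: "i \<le> l" for i l
  proof -
    have e: "k*i + k*(l-i) = k*l" using il by (simp add: add_mult_distrib2[symmetric])
    have "?f i \<otimes>\<^bsub>P\<^esub> ?g (l-i) = Fs i \<otimes>\<^bsub>P\<^esub> (?X (k*i) \<otimes>\<^bsub>P\<^esub> Gs (l-i)) \<otimes>\<^bsub>P\<^esub> ?X (k*(l-i))"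
      using Fc Gc by (simp add: P.m_assoc)
    also have "\<dots> = Fs i \<otimes>\<^bsub>P\<^esub> (Gs (l-i) \<otimes>\<^bsub>P\<^esub> ?X (k*i)) \<otimes>\<^bsub>P\<^esub> ?X (k*(l-i))"
      using Gc by (simp add: monom1_central)
    also have "\<dots> = (Fs i \<otimes>\<^bsub>P\<^esub> Gs (l-i)) \<otimes>\<^bsub>P\<^esub> (?X (k*i) \<otimes>\<^bsub>P\<^esub> ?X (k*(l-i)))"
      using Fc Gc by (simp add: P.m_assoc)
    also have "\<dots> = (Fs i \<otimes>\<^bsub>P\<^esub> Gs (l-i)) \<otimes>\<^bsub>P\<^esub> ?X (k*l)"
      by (simp only: monom_one_mult[symmetric] e)
    finally show ?thesis .
  qed
  have inner: "(\<Oplus>\<^bsub>P\<^esub> i\<in>{..l}. ?f i \<otimes>\<^bsub>P\<^esub> ?g (l-i)) = \<zero>\<^bsub>P\<^esub>" for l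
  proof -
    have "(\<Oplus>\<^bsub>P\<^esub> i\<in>{..l}. ?f i \<otimes>\<^bsub>P\<^esub> ?g (l-i))
        = (\<Oplus>\<^bsub>P\<^esub> i\<in>{..l}. (Fs i \<otimes>\<^bsub>P\<^esub> Gs (l-i)) \<otimes>\<^bsub>P\<^esub> ?X (k*l))"
      by (rule P.finsum_cong') (auto simp: tm Fc Gc)
    also have "\<dots> = (\<Oplus>\<^bsub>P\<^esub> i\<in>{..l}. Fs i \<otimes>\<^bsub>P\<^esub> Gs (l-i)) \<otimes>\<^bsub>P\<^esub> ?X (k*l)"
      by (rule P.finsum_ldistr[symmetric]) (auto simp: Fc Gc)
    also have "\<dots> = \<zero>\<^bsub>P\<^esub>" by (simp add: Z)
    finally show ?thesis .
  qed
  show ?thesis using cp inner by simp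
qed

end

lemma coeff_UP_eq: "p \<in> carrier (UP R) \<Longrightarrow> coeff (UP R) p n = p n"
  by (simp add: UP_def)

lemma carrier_UP_eq: "carrier (UP R) = up R"
  by (simp add: UP_def)

lemma almost_down:
  assumes R: "ring R" and A: "almost_armendariz (UP R)"
  shows "almost_armendariz R"
proof -
  interpret U: UP_ring R "UP R" by (rule UP_ring_of[OF R])
  interpret V: UP_ring "UP R" "UP (UP R)" by (rule UP_ring_of[OF U.UP_ring])
  interpret H: ring_hom_ring R "UP R" "\<lambda>a. monom (UP R) a 0"
    by (rule ring_hom_ring.intro[OF R U.UP_ring]) (simp add: ring_hom_ring_axioms_def U.const_ring_hom)
  show ?thesis unfolding almost_armendariz_def
  proof (intro ballI impI allI)
    fix f g i j
    assume f: "f \<in> carrier (UP R)" and g: "g \<in> carrier (UP R)"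
      and fg: "f \<otimes>\<^bsub>UP R\<^esub> g = \<zero>\<^bsub>UP R\<^esub>"
    define F where "F = (\<lambda>n. monom (UP R) (coeff (UP R) f n) 0)"
    define G where "G = (\<lambda>n. monom (UP R) (coeff (UP R) g n) 0)"
    have Fc: "F \<in> carrier (UP (UP R))"
      unfolding carrier_UP_eq
    proof (rule mem_upI)
      show "F n \<in> carrier (UP R)" for n using f by (simp add: F_def)
      have "bound \<zero>\<^bsub>UP R\<^esub> (deg R f) F"
        by (rule bound.intro) (simp add: F_def U.deg_aboveD[OF _ f])
      then show "\<exists>n. bound \<zero>\<^bsub>UP R\<^esub> n F" by blast
    qed
    have Gc: "G \<in> carrier (UP (UP R))"
      unfolding carrier_UP_eq
    proof (rule mem_upI)
      show "G n \<in> carrier (UP R)" for n using g by (simp add: G_def)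
      have "bound \<zero>\<^bsub>UP R\<^esub> (deg R g) G"
        by (rule bound.intro) (simp add: G_def U.deg_aboveD[OF _ g])
      then show "\<exists>n. bound \<zero>\<^bsub>UP R\<^esub> n G" by blast
    qed
    have cF: "coeff (UP (UP R)) F n = F n" for n using Fc by (rule coeff_UP_eq)
    have cG: "coeff (UP (UP R)) G n = G n" for n using Gc by (rule coeff_UP_eq)
    have FG: "F \<otimes>\<^bsub>UP (UP R)\<^esub> G = \<zero>\<^bsub>UP (UP R)\<^esub>"
    proof (rule V.up_eqI)
      fix n
      have "coeff (UP (UP R)) (F \<otimes>\<^bsub>UP (UP R)\<^esub> G) n
          = (\<Oplus>\<^bsub>UP R\<^esub> i\<in>{..n}. F i \<otimes>\<^bsub>UP R\<^esub> G (n - i))"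
        using Fc Gc by (simp add: cF cG)
      also have "\<dots> = (\<Oplus>\<^bsub>UP R\<^esub> i\<in>{..n}. monom (UP R) (coeff (UP R) f i \<otimes>\<^bsub>R\<^esub> coeff (UP R) g (n - i)) 0)"
      proof (rule U.P.finsum_cong')
        fix i
        show "F i \<otimes>\<^bsub>UP R\<^esub> G (n - i) = monom (UP R) (coeff (UP R) f i \<otimes>\<^bsub>R\<^esub> coeff (UP R) g (n - i)) 0"
          using U.monom_mult[of "coeff (UP R) f i" "coeff (UP R) g (n - i)" 0 0] f g
          by (simp add: F_def G_def)
      qed (use f g in auto)
      also have "\<dots> = monom (UP R) (\<Oplus>\<^bsub>R\<^esub> i\<in>{..n}. coeff (UP R) f i \<otimes>\<^bsub>R\<^esub> coeff (UP R) g (n - i)) 0"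
        using f g by (simp add: Pi_def comp_def)
      also have "\<dots> = monom (UP R) (coeff (UP R) (f \<otimes>\<^bsub>UP R\<^esub> g) n) 0"
        using f g by simp
      also have "\<dots> = coeff (UP (UP R)) \<zero>\<^bsub>UP (UP R)\<^esub> n"
        using fg by simp
      finally show "coeff (UP (UP R)) (F \<otimes>\<^bsub>UP (UP R)\<^esub> G) n = coeff (UP (UP R)) \<zero>\<^bsub>UP (UP R)\<^esub> n" .
    qed (use Fc Gc in simp_all)
    have "coeff (UP (UP R)) F i \<otimes>\<^bsub>UP R\<^esub> coeff (UP (UP R)) G j \<in> prime_radical (UP R)"
      using A Fc Gc FG unfolding almost_armendariz_def by blast
    moreover have "coeff (UP (UP R)) F i \<otimes>\<^bsub>UP R\<^esub> coeff (UP (UP R)) G j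
        = monom (UP R) (coeff (UP R) f i \<otimes>\<^bsub>R\<^esub> coeff (UP R) g j) 0"
      unfolding cF cG using U.monom_mult[of "coeff (UP R) f i" "coeff (UP R) g j" 0 0] f g
      by (simp add: F_def G_def)
    ultimately have mem: "monom (UP R) (coeff (UP R) f i \<otimes>\<^bsub>R\<^esub> coeff (UP R) g j) 0 \<in> prime_radical (UP R)"
      by simp
    show "coeff (UP R) f i \<otimes>\<^bsub>R\<^esub> coeff (UP R) g j \<in> prime_radical R"
      unfolding prime_radical_def
    proof (intro CollectI conjI allI impI)
      show "coeff (UP R) f i \<otimes>\<^bsub>R\<^esub> coeff (UP R) g j \<in> carrier R" using f g by simp
      fix Q assume Q: "nc_prime_ideal Q R"
      have "monom (UP R) (coeff (UP R) f i \<otimes>\<^bsub>R\<^esub> coeff (UP R) g j) 0 \<in> ext_id Q R"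
        using mem U.ext_prime[OF Q] by (auto simp: prime_radical_def)
      then show "coeff (UP R) f i \<otimes>\<^bsub>R\<^esub> coeff (UP R) g j \<in> Q"
        using f g by (auto simp: U.ext_id_P dest: spec[of _ 0])
    qed
  qed
qed


lemma deg_bound_exists:
  assumes R: "ring R" and F: "F \<in> carrier (UP (UP R))"
  shows "\<exists>k. \<forall>i s. k \<le> s \<longrightarrow> coeff (UP R) (coeff (UP (UP R)) F i) s = \<zero>\<^bsub>R\<^esub>"
proof -
  interpret U: UP_ring R "UP R" by (rule UP_ring_of[OF R])
  interpret V: UP_ring "UP R" "UP (UP R)" by (rule UP_ring_of[OF U.UP_ring])
  define k where "k = Suc (Max ((\<lambda>i. deg R (coeff (UP (UP R)) F i)) ` {..deg (UP R) F}))"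
  have "coeff (UP R) (coeff (UP (UP R)) F i) s = \<zero>\<^bsub>R\<^esub>" if s: "k \<le> s" for i s
  proof (cases "i \<le> deg (UP R) F")
    case True
    then have "deg R (coeff (UP (UP R)) F i) \<le> Max ((\<lambda>i. deg R (coeff (UP (UP R)) F i)) ` {..deg (UP R) F})"
      by (intro Max_ge) auto
    then have "deg R (coeff (UP (UP R)) F i) < s" using s by (simp add: k_def)
    then show ?thesis using F by (intro U.deg_aboveD) simp_all
  next
    case False
    then have "coeff (UP (UP R)) F i = \<zero>\<^bsub>UP R\<^esub>" using F by (intro V.deg_aboveD) simp_all
    then show ?thesis by simp
  qed
  then show ?thesis by blast
qed

lemma zero_prime_radical:
  assumes R: "ring R"
  shows "\<zero>\<^bsub>R\<^esub> \<in> prime_radical R"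
proof -
  interpret ring R by (rule R)
  show ?thesis unfolding prime_radical_def
    by (auto simp: nc_prime_ideal_def additive_subgroup.zero_closed ideal.axioms(1))
qed

lemma almost_up:
  assumes R: "ring R" and A: "almost_armendariz R"
  shows "almost_armendariz (UP R)"
proof -
  interpret U: UP_ring R "UP R" by (rule UP_ring_of[OF R])
  interpret V: UP_ring "UP R" "UP (UP R)" by (rule UP_ring_of[OF U.UP_ring])
  show ?thesis unfolding almost_armendariz_def
  proof (intro ballI impI allI)
    fix F G i j
    assume F: "F \<in> carrier (UP (UP R))" and G: "G \<in> carrier (UP (UP R))"
      and FG: "F \<otimes>\<^bsub>UP (UP R)\<^esub> G = \<zero>\<^bsub>UP (UP R)\<^esub>"
    define Fs where "Fs = coeff (UP (UP R)) F"
    define Gs where "Gs = coeff (UP (UP R)) G"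
    have Fc: "\<And>i. Fs i \<in> carrier (UP R)" using F by (simp add: Fs_def)
    have Gc: "\<And>i. Gs i \<in> carrier (UP R)" using G by (simp add: Gs_def)
    have Fd: "\<And>i. deg (UP R) F < i \<Longrightarrow> Fs i = \<zero>\<^bsub>UP R\<^esub>"
      using F by (simp add: Fs_def V.deg_aboveD)
    have Gd: "\<And>i. deg (UP R) G < i \<Longrightarrow> Gs i = \<zero>\<^bsub>UP R\<^esub>"
      using G by (simp add: Gs_def V.deg_aboveD)
    obtain kF where kF: "\<And>i s. kF \<le> s \<Longrightarrow> coeff (UP R) (Fs i) s = \<zero>\<^bsub>R\<^esub>"
      using deg_bound_exists[OF R F] unfolding Fs_def by blast
    obtain kG where kG: "\<And>i s. kG \<le> s \<Longrightarrow> coeff (UP R) (Gs i) s = \<zero>\<^bsub>R\<^esub>"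
      using deg_bound_exists[OF R G] unfolding Gs_def by blast
    define k where "k = max kF kG"
    have HF: "\<And>i s. k \<le> s \<Longrightarrow> coeff (UP R) (Fs i) s = \<zero>\<^bsub>R\<^esub>" using kF by (simp add: k_def)
    have HG: "\<And>i s. k \<le> s \<Longrightarrow> coeff (UP R) (Gs i) s = \<zero>\<^bsub>R\<^esub>" using kG by (simp add: k_def)
    define f where "f = (\<Oplus>\<^bsub>UP R\<^esub> i\<in>{..deg (UP R) F}. Fs i \<otimes>\<^bsub>UP R\<^esub> monom (UP R) \<one>\<^bsub>R\<^esub> (k*i))"
    define g where "g = (\<Oplus>\<^bsub>UP R\<^esub> i\<in>{..deg (UP R) G}. Gs i \<otimes>\<^bsub>UP R\<^esub> monom (UP R) \<one>\<^bsub>R\<^esub> (k*i))"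
    have fc: "f \<in> carrier (UP R)" unfolding f_def by (intro U.P.finsum_closed) (auto simp: Fc)
    have gc: "g \<in> carrier (UP R)" unfolding g_def by (intro U.P.finsum_closed) (auto simp: Gc)
    have Z: "(\<Oplus>\<^bsub>UP R\<^esub> i\<in>{..l}. Fs i \<otimes>\<^bsub>UP R\<^esub> Gs (l - i)) = \<zero>\<^bsub>UP R\<^esub>" for l
    proof -
      have "(\<Oplus>\<^bsub>UP R\<^esub> i\<in>{..l}. Fs i \<otimes>\<^bsub>UP R\<^esub> Gs (l - i)) = coeff (UP (UP R)) (F \<otimes>\<^bsub>UP (UP R)\<^esub> G) l"
        using F G by (simp add: Fs_def Gs_def)
      also have "\<dots> = \<zero>\<^bsub>UP R\<^esub>" using FG by simp
      finally show ?thesis .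
    qed
    have fg: "f \<otimes>\<^bsub>UP R\<^esub> g = \<zero>\<^bsub>UP R\<^esub>"
      unfolding f_def g_def by (rule U.kron_mult_zero[OF Fc Gc Fd Gd Z])
    have cf: "coeff (UP R) f (k*i'+s) = coeff (UP R) (Fs i') s" if "s < k" for i' s
      unfolding f_def by (rule U.kron_coeff[OF Fc HF Fd that])
    have cg: "coeff (UP R) g (k*j'+t) = coeff (UP R) (Gs j') t" if "t < k" for j' t
      unfolding g_def by (rule U.kron_coeff[OF Gc HG Gd that])
    have key: "coeff (UP R) (Fs i) s \<otimes>\<^bsub>R\<^esub> coeff (UP R) (Gs j) t \<in> prime_radical R" for s t
    proof (cases "s < k \<and> t < k")
      case True
      then have "coeff (UP R) f (k*i+s) \<otimes>\<^bsub>R\<^esub> coeff (UP R) g (k*j+t) \<in> prime_radical R"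
        using A fc gc fg unfolding almost_armendariz_def by blast
      then show ?thesis using True cf cg by simp
    next
      case False
      then have "coeff (UP R) (Fs i) s = \<zero>\<^bsub>R\<^esub> \<or> coeff (UP R) (Gs j) t = \<zero>\<^bsub>R\<^esub>"
        using HF HG by auto
      then have "coeff (UP R) (Fs i) s \<otimes>\<^bsub>R\<^esub> coeff (UP R) (Gs j) t = \<zero>\<^bsub>R\<^esub>"
        using Fc Gc by auto
      then show ?thesis using zero_prime_radical[OF R] by simp
    qed
    show "coeff (UP (UP R)) F i \<otimes>\<^bsub>UP R\<^esub> coeff (UP (UP R)) G j \<in> prime_radical (UP R)"
      unfolding Fs_def[symmetric] Gs_def[symmetric] prime_radical_def
    proof (intro CollectI conjI allI impI)
      show "Fs i \<otimes>\<^bsub>UP R\<^esub> Gs j \<in> carrier (UP R)" using Fc Gc by simp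
      fix Q assume Q: "nc_prime_ideal Q (UP R)"
      have iQ: "ideal Q (UP R)" using Q by (simp add: nc_prime_ideal_def)
      have CQ: "nc_prime_ideal (contr_id Q R) R" by (rule U.contr_prime[OF Q])
      have iC: "ideal (contr_id Q R) R" using CQ by (simp add: nc_prime_ideal_def)
      have inC: "coeff (UP R) (Fs i) s \<otimes>\<^bsub>R\<^esub> coeff (UP R) (Gs j) t \<in> contr_id Q R" for s t
        using key[of s t] CQ by (simp add: prime_radical_def)
      show "Fs i \<otimes>\<^bsub>UP R\<^esub> Gs j \<in> Q"
      proof (rule U.coeffs_in_ideal[OF iQ])
        show "Fs i \<otimes>\<^bsub>UP R\<^esub> Gs j \<in> carrier (UP R)" using Fc Gc by simp
        fix n
        have "coeff (UP R) (Fs i \<otimes>\<^bsub>UP R\<^esub> Gs j) n \<in> contr_id Q R"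
          using Fc Gc inC by (auto intro!: U.R.finsum_ideal[OF iC])
        then show "monom (UP R) (coeff (UP R) (Fs i \<otimes>\<^bsub>UP R\<^esub> Gs j) n) 0 \<in> Q"
          by (simp add: U.contr_id_P)
      qed
    qed
  qed
qed

theorem theorem2p3:
  fixes R :: "('a, 'm) ring_scheme"
  assumes "ring R"
  shows "almost_armendariz R \<longleftrightarrow> almost_armendariz (UP R)"
  using almost_up[OF assms] almost_down[OF assms] by blast

end
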